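(* Let $L=E[C_1,\dots,C_n]$ be a congruence uniform lattice that is extremal. Then every element of the spine of $L$ is left modular.
   Context: All lattices are finite. For a convex subset $C$ of a lattice $L$ (convex: $x,y\in C\Rightarrow[x,y]\subseteq C$), let $I_L(C)=\{y\in L\mid\exists x\in C,\ y\le x\}$, and let the doubling $L[C]$ be the subposet of $L\times\{0<1\}$ on $\big(I_L(C)\times\{0\}\big)\sqcup\big(((L\setminus I_L(C))\cup C)\times\{1\}\big)$. $E[\,]$ is the one-element lattice and $E[C_1,\dots,C_{i+1}]:=E[C_1,\dots,C_i][C_{i+1}]$ with $C_{i+1}$ a nonempty convex subset of $E[C_1,\dots,C_i]$; if every $C_i$ is an interval, the lattice is congruence uniform. The length of a poset is the maximum number of elements of a chain minus one; the spine is the set of elements lying on some chain of maximum length. $L$ is extremal if its length equals both the number of join-irreducible elements (covering exactly one element) and the number of meet-irreducible elements (covered by exactly one element). An element $a$ is left modular if for all $b<c$, $(b\vee a)\wedge c=b\vee(a\wedge c)$. *)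

theory Defs
  imports Main
begin

text \<open>Elements of E[C_1,...,C_n] are encoded as boolean lists of length n:
  the element (x,b) of L[C] (a subposet of L x {0<1}) is encoded as b # x.\<close>

definition leq :: "bool list \<Rightarrow> bool list \<Rightarrow> bool" where
  "leq xs ys \<longleftrightarrow> list_all2 (\<le>) xs ys"

definition lt :: "bool list \<Rightarrow> bool list \<Rightarrow> bool" where
  "lt xs ys \<longleftrightarrow> leq xs ys \<and> xs \<noteq> ys"

definition down_set :: "bool list set \<Rightarrow> bool list set \<Rightarrow> bool list set" where
  "down_set L C = {y \<in> L. \<exists>x\<in>C. leq y x}"

definition doubling :: "bool list set \<Rightarrow> bool list set \<Rightarrow> bool list set" where
  "doubling L C = (\<lambda>x. False # x) ` down_set L C
                \<union> (\<lambda>x. True # x) ` ((L - down_set L C) \<union> C)"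

definition interval :: "bool list set \<Rightarrow> bool list \<Rightarrow> bool list \<Rightarrow> bool list set" where
  "interval L a b = {x \<in> L. leq a x \<and> leq x b}"

inductive cu_doubling :: "bool list set \<Rightarrow> bool" where
  base: "cu_doubling {[]}"
| step: "cu_doubling L \<Longrightarrow> a \<in> L \<Longrightarrow> b \<in> L \<Longrightarrow> leq a b
          \<Longrightarrow> cu_doubling (doubling L (interval L a b))"

definition is_chain :: "bool list set \<Rightarrow> bool list set \<Rightarrow> bool" where
  "is_chain L K \<longleftrightarrow> K \<subseteq> L \<and> (\<forall>x\<in>K. \<forall>y\<in>K. leq x y \<or> leq y x)"

definition poset_length :: "bool list set \<Rightarrow> nat" where
  "poset_length L = Max {card K - 1 | K. is_chain L K}"

definition spine :: "bool list set \<Rightarrow> bool list set" where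
  "spine L = {x \<in> L. \<exists>K. is_chain L K \<and> x \<in> K \<and> card K - 1 = poset_length L}"

definition covers :: "bool list set \<Rightarrow> bool list \<Rightarrow> bool list \<Rightarrow> bool" where
  "covers L x y \<longleftrightarrow> x \<in> L \<and> y \<in> L \<and> lt y x \<and> \<not> (\<exists>z\<in>L. lt y z \<and> lt z x)"

definition join_irreducibles :: "bool list set \<Rightarrow> bool list set" where
  "join_irreducibles L = {x \<in> L. card {y. covers L x y} = 1}"

definition meet_irreducibles :: "bool list set \<Rightarrow> bool list set" where
  "meet_irreducibles L = {x \<in> L. card {y. covers L y x} = 1}"

definition extremal :: "bool list set \<Rightarrow> bool" where
  "extremal L \<longleftrightarrow> poset_length L = card (join_irreducibles L)
                 \<and> poset_length L = card (meet_irreducibles L)"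

definition join :: "bool list set \<Rightarrow> bool list \<Rightarrow> bool list \<Rightarrow> bool list" where
  "join L x y = (THE z. z \<in> L \<and> leq x z \<and> leq y z \<and> (\<forall>w\<in>L. leq x w \<and> leq y w \<longrightarrow> leq z w))"

definition meet :: "bool list set \<Rightarrow> bool list \<Rightarrow> bool list \<Rightarrow> bool list" where
  "meet L x y = (THE z. z \<in> L \<and> leq z x \<and> leq z y \<and> (\<forall>w\<in>L. leq w x \<and> leq w y \<longrightarrow> leq w z))"

definition left_modular :: "bool list set \<Rightarrow> bool list \<Rightarrow> bool" where
  "left_modular L a \<longleftrightarrow> (\<forall>b\<in>L. \<forall>c\<in>L. lt b c \<longrightarrow>
      meet L (join L b a) c = join L b (meet L a c))"

end

theory Submission
  imports Defs
begin

lemma leq_Cons[simp]: "leq (b # x) (c # y) \<longleftrightarrow> b \<le> c \<and> leq x y"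
  by (simp add: leq_def)
lemma leq_Nil1[simp]: "leq [] y \<longleftrightarrow> y = []"
  by (auto simp add: leq_def)
lemma leq_Nil2[simp]: "leq x [] \<longleftrightarrow> x = []"
  by (auto simp add: leq_def)
lemma leq_length: "leq x y \<Longrightarrow> length x = length y"
  by (simp add: leq_def list_all2_lengthD)
lemma leq_refl[simp]: "leq x x"
  by (induct x) auto
lemma leq_trans: "leq x y \<Longrightarrow> leq y z \<Longrightarrow> leq x z"
proof (induct x arbitrary: y z)
  case Nil then show ?case by simp
next
  case (Cons a x)
  then show ?case by (cases y; cases z) auto
qed
lemma leq_antisym: "leq x y \<Longrightarrow> leq y x \<Longrightarrow> x = y"
proof (induct x arbitrary: y)
  case Nil then show ?case by simp
next
  case (Cons a x)
  then show ?case by (cases y) auto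
qed

fun jn :: "bool list \<Rightarrow> bool list \<Rightarrow> bool list" where
  "jn (a # x) (b # y) = (a \<or> b) # jn x y"
| "jn _ _ = []"

lemma jn_upper1: "length x = length y \<Longrightarrow> leq x (jn x y)"
  by (induct x y rule: jn.induct) auto
lemma jn_upper2: "length x = length y \<Longrightarrow> leq y (jn x y)"
  by (induct x y rule: jn.induct) auto
lemma jn_least: "leq x w \<Longrightarrow> leq y w \<Longrightarrow> leq (jn x y) w"
proof (induct x y arbitrary: w rule: jn.induct)
  case (1 a x b y)
  then show ?case by (cases w) auto
next
  case ("2_1" y)
  then show ?case by (cases y) auto
next
  case ("2_2" v)
  then show ?case by auto
qed

definition is_glb :: "bool list set \<Rightarrow> bool list \<Rightarrow> bool list \<Rightarrow> bool list \<Rightarrow> bool" where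
  "is_glb L x y z \<longleftrightarrow> z \<in> L \<and> leq z x \<and> leq z y \<and> (\<forall>w\<in>L. leq w x \<and> leq w y \<longrightarrow> leq w z)"

lemma meet_eq: "is_glb L x y z \<Longrightarrow> meet L x y = z"
  unfolding meet_def is_glb_def
  by (rule the_equality) (auto intro: leq_antisym)

lemma join_eq: "x \<in> L \<Longrightarrow> y \<in> L \<Longrightarrow> length x = length y \<Longrightarrow> jn x y \<in> L \<Longrightarrow> join L x y = jn x y"
  unfolding join_def
  by (rule the_equality) (auto intro: leq_antisym jn_upper1 jn_upper2 jn_least)

definition inU :: "bool list \<Rightarrow> bool list \<Rightarrow> bool list \<Rightarrow> bool" where
  "inU p q x \<longleftrightarrow> \<not> leq x q \<or> leq p x"

lemma inU_up: "inU p q x \<Longrightarrow> leq x y \<Longrightarrow> inU p q y"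
  unfolding inU_def by (meson leq_trans)

lemma dbl_Cons:
  assumes "q \<in> L" "leq p q"
  shows "(b # x) \<in> doubling L (interval L p q) \<longleftrightarrow> x \<in> L \<and> (if b then inU p q x else leq x q)"
proof -
  have D: "down_set L (interval L p q) = {y \<in> L. leq y q}"
    using assms unfolding down_set_def interval_def by (auto intro: leq_trans)
  show ?thesis unfolding doubling_def D by (auto simp: inU_def interval_def)
qed

lemma dbl_Nil: "[] \<notin> doubling L C"
  unfolding doubling_def by auto

lemma dbl_cases: "w \<in> doubling L C \<Longrightarrow> \<exists>b x. w = b # x"
  unfolding doubling_def by auto

inductive cud :: "nat \<Rightarrow> bool list set \<Rightarrow> bool" where
  base: "cud 0 {[]}"
| step: "cud n L \<Longrightarrow> p \<in> L \<Longrightarrow> q \<in> L \<Longrightarrow> leq p q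
          \<Longrightarrow> cud (Suc n) (doubling L (interval L p q))"

lemma cu_cud: "cu_doubling L \<Longrightarrow> \<exists>n. cud n L"
  by (induct rule: cu_doubling.induct) (auto intro: cud.intros)

lemma dbl_step:
  assumes fin: "finite L" and len: "\<forall>x\<in>L. length x = n"
    and jc: "\<forall>x\<in>L. \<forall>y\<in>L. jn x y \<in> L"
    and gl: "\<forall>x\<in>L. \<forall>y\<in>L. \<exists>z. is_glb L x y z"
    and pL: "p \<in> L" and qL: "q \<in> L" and pq: "leq p q"
  defines "L' \<equiv> doubling L (interval L p q)"
  shows "finite L' \<and> (\<forall>x\<in>L'. length x = Suc n) \<and> (\<forall>x\<in>L'. \<forall>y\<in>L'. jn x y \<in> L')
     \<and> (\<forall>x\<in>L'. \<forall>y\<in>L'. \<exists>z. is_glb L' x y z)"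
proof (intro conjI ballI)
  note mem = dbl_Cons[OF qL pq, folded L'_def]
  have sub: "L' \<subseteq> (Cons False) ` L \<union> (Cons True) ` L"
  proof
    fix w assume "w \<in> L'"
    then obtain b x where w: "w = b # x" using dbl_cases L'_def by blast
    with \<open>w \<in> L'\<close> mem have "x \<in> L" by auto
    then show "w \<in> (Cons False) ` L \<union> (Cons True) ` L" using w by (cases b) auto
  qed
  then show "finite L'" using fin by (meson finite_Un finite_imageI finite_subset)
  fix w1 assume w1: "w1 \<in> L'"
  then obtain b x where w1e: "w1 = b # x" using dbl_cases L'_def by blast
  with w1 mem have xL: "x \<in> L" and bx: "if b then inU p q x else leq x q" by auto
  show "length w1 = Suc n" using w1e xL len by simp
  fix w2 assume w2: "w2 \<in> L'"
  then obtain c y where w2e: "w2 = c # y" using dbl_cases L'_def by blast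
  with w2 mem have yL: "y \<in> L" and cy: "if c then inU p q y else leq y q" by auto
  have lxy: "length x = length y" using xL yL len by simp
  show "jn w1 w2 \<in> L'"
  proof -
    have "jn x y \<in> L" using jc xL yL by blast
    moreover have "if b \<or> c then inU p q (jn x y) else leq (jn x y) q"
    proof (cases "b \<or> c")
      case True
      then show ?thesis
        using bx cy inU_up jn_upper1[OF lxy] jn_upper2[OF lxy] by (auto split: if_splits)
    next
      case False
      then show ?thesis using bx cy jn_least by auto
    qed
    ultimately show ?thesis using w1e w2e mem by simp
  qed
  obtain m where m: "is_glb L x y m" using gl xL yL by blast
  define bit where "bit = (b \<and> c \<and> inU p q m)"
  have "is_glb L' w1 w2 (bit # m)"
    unfolding is_glb_def
  proof (intro conjI ballI impI)
    have mL: "m \<in> L" and mx: "leq m x" and my: "leq m y" using m unfolding is_glb_def by auto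
    have "if bit then inU p q m else leq m q"
    proof (cases bit)
      case True then show ?thesis unfolding bit_def by simp
    next
      case False
      then have "\<not> b \<or> \<not> c \<or> \<not> inU p q m" unfolding bit_def by auto
      then show ?thesis using False bx cy mx my leq_trans unfolding inU_def by (auto split: if_splits)
    qed
    then show "bit # m \<in> L'" using mL mem by simp
    show "leq (bit # m) w1" using w1e mx bit_def by simp
    show "leq (bit # m) w2" using w2e my bit_def by simp
    fix w assume "w \<in> L'" and le: "leq w w1 \<and> leq w w2"
    then obtain d z where we: "w = d # z" using dbl_cases L'_def by blast
    with \<open>w \<in> L'\<close> mem have zL: "z \<in> L" and dz: "if d then inU p q z else leq z q" by auto
    have "leq z m" using m zL le w1e w2e we unfolding is_glb_def by auto
    moreover have "d \<le> bit"
    proof (cases d)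
      case True
      then have "b" "c" using le w1e w2e we by auto
      moreover have "inU p q m" using True dz inU_up \<open>leq z m\<close> by auto
      ultimately show ?thesis unfolding bit_def by simp
    qed simp
    ultimately show "leq w (bit # m)" using we by simp
  qed
  then show "\<exists>z. is_glb L' w1 w2 z" by blast
qed

lemma cud_basic: "cud n L \<Longrightarrow> finite L \<and> (\<forall>x\<in>L. length x = n) \<and> (\<forall>x\<in>L. \<forall>y\<in>L. jn x y \<in> L)
     \<and> (\<forall>x\<in>L. \<forall>y\<in>L. \<exists>z. is_glb L x y z)"
proof (induct rule: cud.induct)
  case base
  show ?case by (auto simp: is_glb_def)
next
  case (step n L p q)
  then show ?case using dbl_step[of L n p q] by blast
qed


definition cnt :: "bool list \<Rightarrow> nat" where "cnt x = length (filter id x)"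

lemma cnt_mono: "leq x y \<Longrightarrow> cnt x \<le> cnt y"
proof (induct x arbitrary: y)
  case Nil then show ?case by simp
next
  case (Cons a x)
  then obtain c z where y: "y = c # z" by (cases y) auto
  with Cons.prems have "leq x z" by auto
  then have "cnt x \<le> cnt z" using Cons.hyps by blast
  then show ?case using Cons.prems y by (auto simp: cnt_def)
qed

lemma cnt_eq: "leq x y \<Longrightarrow> cnt x = cnt y \<Longrightarrow> x = y"
proof (induct x arbitrary: y)
  case Nil then show ?case by simp
next
  case (Cons a x)
  then obtain c z where y: "y = c # z" by (cases y) auto
  with Cons.prems have "a \<le> c" "leq x z" by auto
  moreover have "cnt x \<le> cnt z" using cnt_mono \<open>leq x z\<close> by blast
  ultimately have "a = c" "cnt x = cnt z" using Cons.prems y by (auto simp: cnt_def split: if_splits)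
  then show ?case using Cons.hyps \<open>leq x z\<close> y by simp
qed

lemma chain_bound:
  assumes "finite L" "\<forall>x\<in>L. length x = n" "K \<subseteq> L" "\<forall>x\<in>K. \<forall>y\<in>K. leq x y \<or> leq y x"
  shows "card K \<le> Suc n"
proof -
  have fK: "finite K" using assms finite_subset by blast
  have "inj_on cnt K"
    using assms(4) cnt_eq unfolding inj_on_def by metis
  then have "card K = card (cnt ` K)" by (simp add: card_image)
  also have "cnt ` K \<subseteq> {0..n}"
    using assms(2,3) by (auto simp: cnt_def) (metis length_filter_le subsetD)
  then have "card (cnt ` K) \<le> card {0..n}" by (intro card_mono) auto
  finally show ?thesis by simp
qed

definition isJI :: "bool list set \<Rightarrow> bool list \<Rightarrow> bool" where
  "isJI L x \<longleftrightarrow> x \<in> L \<and> (\<exists>m\<in>L. lt m x \<and> (\<forall>z\<in>L. lt z x \<longrightarrow> leq z m))"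

lemma isJI_ji: "isJI L x \<Longrightarrow> x \<in> join_irreducibles L"
proof -
  assume "isJI L x"
  then obtain m where x: "x \<in> L" and m: "m \<in> L" "lt m x" "\<forall>z\<in>L. lt z x \<longrightarrow> leq z m"
    unfolding isJI_def by blast
  have "{y. covers L x y} = {m}"
  proof (intro equalityI subsetI)
    fix y assume "y \<in> {y. covers L x y}"
    then have y: "y \<in> L" "lt y x" "\<not> (\<exists>z\<in>L. lt y z \<and> lt z x)" unfolding covers_def by auto
    then have "leq y m" using m by blast
    then show "y \<in> {m}" using y m unfolding lt_def by auto
  next
    fix y assume "y \<in> {m}"
    then show "y \<in> {y. covers L x y}" using m x unfolding covers_def lt_def
      by (auto dest: leq_antisym)
  qed
  then show ?thesis using x unfolding join_irreducibles_def by simp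
qed

lemma ji_step:
  assumes fin: "finite L" and pL: "p \<in> L" and qL: "q \<in> L" and pq: "leq p q"
  defines "L' \<equiv> doubling L (interval L p q)"
  shows "card {x. isJI L x} + 1 \<le> card {x. isJI L' x}"
proof -
  note mem = dbl_Cons[OF qL pq, folded L'_def]
  have finL': "finite L'"
  proof -
    have "L' \<subseteq> (Cons False) ` L \<union> (Cons True) ` L"
    proof
      fix w assume "w \<in> L'"
      then obtain b x where w: "w = b # x" using dbl_cases L'_def by blast
      with \<open>w \<in> L'\<close> mem have "x \<in> L" by auto
      then show "w \<in> (Cons False) ` L \<union> (Cons True) ` L" using w by (cases b) auto
    qed
    then show ?thesis using fin by (meson finite_Un finite_imageI finite_subset)
  qed
  define lift where "lift j = (if leq j q then False # j else True # j)" for j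
  define S where "S = {x. isJI L x}"
  have finS: "finite S" using fin unfolding S_def isJI_def by (auto intro: finite_subset)
  have lift_JI: "isJI L' (lift j)" if "j \<in> S" for j
  proof -
    from that obtain m where j: "j \<in> L" and m: "m \<in> L" "lt m j" "\<forall>z\<in>L. lt z j \<longrightarrow> leq z m"
      unfolding S_def isJI_def by blast
    have mj: "leq m j" "m \<noteq> j" using m(2) unfolding lt_def by auto
    show ?thesis
    proof (cases "leq j q")
      case True
      have "m \<in> L \<and> leq m q" using m mj True leq_trans by blast
      then have wL: "False # m \<in> L'" using mem by simp
      have jL: "False # j \<in> L'" using mem j True by simp
      show ?thesis unfolding isJI_def lift_def using True
      proof (simp add: jL, intro bexI[OF _ wL] conjI ballI impI)
        show "lt (False # m) (False # j)" using mj unfolding lt_def by simp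
        fix w assume "w \<in> L'" "lt w (False # j)"
        then obtain d z where w: "w = d # z" using dbl_cases L'_def by blast
        with \<open>w \<in> L'\<close> mem have "z \<in> L" by auto
        with \<open>lt w (False # j)\<close> w m(3) show "leq w (False # m)" unfolding lt_def by auto
      qed
    next
      case False
      have jL: "True # j \<in> L'" using mem j False unfolding inU_def by simp
      define wit where "wit = (if inU p q m then True # m else False # m)"
      have wL: "wit \<in> L'" using mem m(1) unfolding wit_def inU_def by auto
      show ?thesis unfolding isJI_def lift_def using False
      proof (simp add: jL, intro bexI[OF _ wL] conjI ballI impI)
        show "lt wit (True # j)" using mj unfolding lt_def wit_def by auto
        fix w assume "w \<in> L'" "lt w (True # j)"
        then obtain d z where w: "w = d # z" using dbl_cases L'_def by blast
        with \<open>w \<in> L'\<close> mem have zL: "z \<in> L" and dz: "if d then inU p q z else leq z q" by auto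
        have "z \<noteq> j" using \<open>lt w (True # j)\<close> w dz False unfolding lt_def by (cases d) auto
        then have "lt z j" using \<open>lt w (True # j)\<close> w unfolding lt_def by auto
        then have zm: "leq z m" using m(3) zL by blast
        show "leq w wit"
        proof (cases "inU p q m")
          case True then show ?thesis using zm w unfolding wit_def by simp
        next
          case False
          then have "\<not> d" using dz zm inU_up by auto
          then show ?thesis using zm w False unfolding wit_def by simp
        qed
      qed
    qed
  qed
  have new_JI: "isJI L' (True # p)"
  proof -
    have pL': "True # p \<in> L'" using mem pL unfolding inU_def by simp
    have wL: "False # p \<in> L'" using mem pL pq by simp
    show ?thesis unfolding isJI_def
    proof (simp add: pL', intro bexI[OF _ wL] conjI ballI impI)
      show "lt (False # p) (True # p)" unfolding lt_def by simp
      fix w assume "w \<in> L'" "lt w (True # p)"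
      then obtain d z where w: "w = d # z" using dbl_cases L'_def by blast
      with \<open>w \<in> L'\<close> mem have zL: "z \<in> L" and dz: "if d then inU p q z else leq z q" by auto
      have zp: "leq z p" using \<open>lt w (True # p)\<close> w unfolding lt_def by simp
      have "\<not> d"
      proof
        assume d: d
        then have "z \<noteq> p" using \<open>lt w (True # p)\<close> w unfolding lt_def by auto
        moreover have "inU p q z" using d dz by simp
        ultimately show False using zp pq leq_trans leq_antisym unfolding inU_def by blast
      qed
      then show "leq w (False # p)" using w zp by simp
    qed
  qed
  have inj: "inj_on lift S" unfolding inj_on_def lift_def by (auto split: if_splits)
  have notin: "True # p \<notin> lift ` S" unfolding lift_def using pq by auto
  have "card S + 1 = card (insert (True # p) (lift ` S))"
    using notin finS inj by (simp add: card_image)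
  also have "\<dots> \<le> card {x. isJI L' x}"
  proof (rule card_mono)
    show "finite {x. isJI L' x}" using finL' unfolding isJI_def by (auto intro: finite_subset)
    show "insert (True # p) (lift ` S) \<subseteq> {x. isJI L' x}" using new_JI lift_JI by auto
  qed
  finally show ?thesis unfolding S_def .
qed

lemma ji_count: "cud n L \<Longrightarrow> n \<le> card {x. isJI L x}"
proof (induct rule: cud.induct)
  case base then show ?case by simp
next
  case (step n L p q)
  then show ?case using ji_step[of L p q] cud_basic[OF step(1)] by simp
qed


lemma glb_dbl:
  assumes qL: "q \<in> L" and pq: "leq p q"
    and m: "is_glb L x y m"
    and bx: "b # x \<in> doubling L (interval L p q)" and cy: "c # y \<in> doubling L (interval L p q)"
  shows "is_glb (doubling L (interval L p q)) (b # x) (c # y) ((b \<and> c \<and> inU p q m) # m)"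
proof -
  note mem = dbl_Cons[OF qL pq]
  have bx': "if b then inU p q x else leq x q" using bx mem by simp
  have cy': "if c then inU p q y else leq y q" using cy mem by simp
  define bit where "bit = (b \<and> c \<and> inU p q m)"
  have "is_glb (doubling L (interval L p q)) (b # x) (c # y) (bit # m)"
    unfolding is_glb_def
  proof (intro conjI ballI impI)
    have mL: "m \<in> L" and mx: "leq m x" and my: "leq m y" using m unfolding is_glb_def by auto
    have "if bit then inU p q m else leq m q"
    proof (cases bit)
      case True then show ?thesis unfolding bit_def by simp
    next
      case False
      then have "\<not> b \<or> \<not> c \<or> \<not> inU p q m" unfolding bit_def by auto
      then show ?thesis using False bx' cy' mx my leq_trans unfolding inU_def by (auto split: if_splits)
    qed
    then show "bit # m \<in> doubling L (interval L p q)" using mL mem by simp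
    show "leq (bit # m) (b # x)" using mx bit_def by simp
    show "leq (bit # m) (c # y)" using my bit_def by simp
    fix w assume "w \<in> doubling L (interval L p q)" and le: "leq w (b # x) \<and> leq w (c # y)"
    then obtain d z where we: "w = d # z" using dbl_cases by blast
    with \<open>w \<in> doubling L (interval L p q)\<close> mem have zL: "z \<in> L" and dz: "if d then inU p q z else leq z q" by auto
    have "leq z m" using m zL le we unfolding is_glb_def by auto
    moreover have "d \<le> bit"
    proof (cases d)
      case True
      then have "b" "c" using le we by auto
      moreover have "inU p q m" using True dz inU_up \<open>leq z m\<close> by auto
      ultimately show ?thesis unfolding bit_def by simp
    qed simp
    ultimately show "leq w (bit # m)" using we by simp
  qed
  then show ?thesis unfolding bit_def .
qed

definition LM :: "bool list set \<Rightarrow> bool list \<Rightarrow> bool" where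
  "LM L a \<longleftrightarrow> (\<forall>b\<in>L. \<forall>c\<in>L. leq b c \<longrightarrow> meet L (join L b a) c = join L b (meet L a c))"

lemma LM_step:
  assumes cL: "cud n L" and pL: "p \<in> L" and qL: "q \<in> L" and pq: "leq p q"
    and IH: "LM L a" and aL: "a \<in> L" and pa: "\<beta> \<Longrightarrow> leq p a"
    and aL': "\<beta> # a \<in> doubling L (interval L p q)"
  shows "LM (doubling L (interval L p q)) (\<beta> # a)"
  unfolding LM_def
proof (intro ballI impI)
  define L' where "L' = doubling L (interval L p q)"
  note mem = dbl_Cons[OF qL pq, folded L'_def]
  have cL': "cud (Suc n) L'" unfolding L'_def using cL pL qL pq by (rule cud.step)
  note bL = cud_basic[OF cL] and bL' = cud_basic[OF cL']
  fix b' c' assume b'L: "b' \<in> doubling L (interval L p q)" and c'L: "c' \<in> doubling L (interval L p q)"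
    and bc': "leq b' c'"
  obtain \<beta>1 b where b'e: "b' = \<beta>1 # b" using dbl_cases b'L by blast
  obtain \<gamma> c where c'e: "c' = \<gamma> # c" using dbl_cases c'L by blast
  have bL0: "b \<in> L" and bb: "if \<beta>1 then inU p q b else leq b q" using b'L b'e mem L'_def by auto
  have cL0: "c \<in> L" and cc: "if \<gamma> then inU p q c else leq c q" using c'L c'e mem L'_def by auto
  have aa: "if \<beta> then inU p q a else leq a q" using aL' mem L'_def by auto
  have bc: "leq b c" and bg: "\<beta>1 \<le> \<gamma>" using bc' b'e c'e by auto
  have len: "length b = length a" "length a = length c" "length b = length c"
    using bL aL bL0 cL0 by auto
  have jba: "jn b a \<in> L" using bL bL0 aL by blast
  have j1: "join L b a = jn b a" using join_eq[OF bL0 aL len(1) jba] .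
  have j1L0: "jn b' (\<beta> # a) \<in> L'" using bL' b'L aL' L'_def by blast
  have lb'a: "length b' = length (\<beta> # a)" using bL' b'L aL' L'_def by auto
  have j1': "join L' b' (\<beta> # a) = (\<beta>1 \<or> \<beta>) # jn b a"
    using join_eq[OF _ _ lb'a j1L0] b'L aL' b'e L'_def by simp
  have j1L': "(\<beta>1 \<or> \<beta>) # jn b a \<in> L'" using j1L0 b'e by simp
  obtain t where t: "is_glb L (jn b a) c t" using bL jba cL0 by blast
  obtain m where m: "is_glb L a c m" using bL aL cL0 by blast
  have tL: "t \<in> L" and mL: "m \<in> L" and tc: "leq t c" and mc: "leq m c" and ma: "leq m a"
    using t m unfolding is_glb_def by auto
  have jbm: "jn b m \<in> L" using bL bL0 mL by blast
  have lbm: "length b = length m" using bL bL0 mL by auto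
  have IH0: "meet L (join L b a) c = join L b (meet L a c)"
    using IH bL0 cL0 bc unfolding LM_def by blast
  have IH': "t = jn b m"
    using IH0 unfolding j1 meet_eq[OF t] meet_eq[OF m] join_eq[OF bL0 mL lbm jbm] .
  have mt1: "meet L' (join L' b' (\<beta> # a)) c' = ((\<beta>1 \<or> \<beta>) \<and> \<gamma> \<and> inU p q t) # t"
  proof -
    have "is_glb L' ((\<beta>1 \<or> \<beta>) # jn b a) (\<gamma> # c) (((\<beta>1 \<or> \<beta>) \<and> \<gamma> \<and> inU p q t) # t)"
      using glb_dbl[OF qL pq t] j1L' c'L c'e L'_def by simp
    then show ?thesis using meet_eq j1' c'e by simp
  qed
  have mt2: "meet L' (\<beta> # a) c' = (\<beta> \<and> \<gamma> \<and> inU p q m) # m"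
  proof -
    have "is_glb L' (\<beta> # a) (\<gamma> # c) ((\<beta> \<and> \<gamma> \<and> inU p q m) # m)"
      using glb_dbl[OF qL pq m] aL' c'L c'e L'_def by simp
    then show ?thesis using meet_eq c'e by simp
  qed
  have m2L: "(\<beta> \<and> \<gamma> \<and> inU p q m) # m \<in> L'"
    using glb_dbl[OF qL pq m] aL' c'L c'e L'_def unfolding is_glb_def by auto
  have j2L0: "jn b' ((\<beta> \<and> \<gamma> \<and> inU p q m) # m) \<in> L'" using bL' b'L m2L L'_def by blast
  have lb'm: "length b' = length ((\<beta> \<and> \<gamma> \<and> inU p q m) # m)" using bL' b'L m2L L'_def by auto
  have j2: "join L' b' ((\<beta> \<and> \<gamma> \<and> inU p q m) # m) = (\<beta>1 \<or> (\<beta> \<and> \<gamma> \<and> inU p q m)) # jn b m"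
    using join_eq[OF _ m2L lb'm j2L0] b'L b'e L'_def by simp
  have bits: "((\<beta>1 \<or> \<beta>) \<and> \<gamma> \<and> inU p q t) = (\<beta>1 \<or> (\<beta> \<and> \<gamma> \<and> inU p q m))"
  proof
    assume H: "(\<beta>1 \<or> \<beta>) \<and> \<gamma> \<and> inU p q t"
    show "\<beta>1 \<or> (\<beta> \<and> \<gamma> \<and> inU p q m)"
    proof (cases \<beta>1)
      case False
      then have \<beta> \<gamma> "inU p q t" using H by auto
      have bq: "leq b q" using bb False by simp
      have "inU p q m"
      proof (rule ccontr)
        assume nm: "\<not> inU p q m"
        then have mq: "leq m q" and npm: "\<not> leq p m" unfolding inU_def by auto
        have "leq t q" unfolding IH' using jn_least[OF bq mq] .
        then have "leq p t" using \<open>inU p q t\<close> unfolding inU_def by simp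
        then have "leq p c" using tc leq_trans by blast
        moreover have "leq p a" using pa \<open>\<beta>\<close> .
        ultimately have "leq p m" using m pL unfolding is_glb_def by blast
        then show False using npm by simp
      qed
      then show ?thesis using \<open>\<beta>\<close> \<open>\<gamma>\<close> by simp
    qed simp
  next
    assume H: "\<beta>1 \<or> (\<beta> \<and> \<gamma> \<and> inU p q m)"
    show "(\<beta>1 \<or> \<beta>) \<and> \<gamma> \<and> inU p q t"
    proof (cases \<beta>1)
      case True
      then have "\<gamma>" "inU p q b" using bg bb by auto
      moreover have "leq b t" unfolding IH' using jn_upper1[OF lbm] .
      ultimately show ?thesis using True inU_up by blast
    next
      case False
      then have \<beta> \<gamma> "inU p q m" using H by auto
      moreover have "leq m t" unfolding IH' using jn_upper2[OF lbm] .
      ultimately show ?thesis using inU_up by blast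
    qed
  qed
  show "meet (doubling L (interval L p q)) (join (doubling L (interval L p q)) b' (\<beta> # a)) c' =
       join (doubling L (interval L p q)) b' (meet (doubling L (interval L p q)) (\<beta> # a) c')"
    using mt1 mt2 j2 bits IH' unfolding L'_def by simp
qed


lemma P7: "cud n L \<Longrightarrow> K \<subseteq> L \<Longrightarrow> \<forall>x\<in>K. \<forall>y\<in>K. leq x y \<or> leq y x \<Longrightarrow> card K = Suc n
  \<Longrightarrow> a \<in> K \<Longrightarrow> LM L a"
proof (induct arbitrary: K a rule: cud.induct)
  case base
  have g: "is_glb {[]} [] [] []" unfolding is_glb_def by simp
  have j: "join {[]} [] [] = []" using join_eq[of "[]" "{[]}" "[]"] by simp
  have "a = []" using base by auto
  then show ?case unfolding LM_def using meet_eq[OF g] j by simp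
next
  case (step n L p q K' a')
  define L' where "L' = doubling L (interval L p q)"
  note mem = dbl_Cons[OF step.hyps(4,5), folded L'_def]
  have cL': "cud (Suc n) L'" unfolding L'_def using step.hyps(1,3,4,5) by (rule cud.step)
  note bL = cud_basic[OF step.hyps(1)] and bL' = cud_basic[OF cL']
  have KL': "K' \<subseteq> L'" using step.prems L'_def by simp
  have finK': "finite K'" using KL' bL' finite_subset by blast
  define K0 where "K0 = {x. False # x \<in> K'}"
  define K1 where "K1 = {x. True # x \<in> K'}"
  have Keq: "K' = Cons False ` K0 \<union> Cons True ` K1"
  proof (intro equalityI subsetI)
    fix w assume "w \<in> K'"
    then obtain b x where "w = b # x" using KL' dbl_cases L'_def by blast
    then show "w \<in> Cons False ` K0 \<union> Cons True ` K1" using \<open>w \<in> K'\<close> K0_def K1_def by (cases b) auto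
  qed (auto simp: K0_def K1_def)
  have finK0: "finite K0"
  proof -
    have "K0 \<subseteq> tl ` K'" unfolding K0_def by (auto intro: image_eqI[where x="False # _"])
    then show ?thesis using finK' finite_subset by blast
  qed
  have finK1: "finite K1"
  proof -
    have "K1 \<subseteq> tl ` K'" unfolding K1_def by (auto intro: image_eqI[where x="True # _"])
    then show ?thesis using finK' finite_subset by blast
  qed
  have cardK': "card K' = card K0 + card K1"
    unfolding Keq by (subst card_Un_disjoint) (auto simp: finK0 finK1 card_image)
  have K01L: "K0 \<union> K1 \<subseteq> L" using KL' mem unfolding K0_def K1_def by auto
  have ch: "\<forall>x\<in>K0 \<union> K1. \<forall>y\<in>K0 \<union> K1. leq x y \<or> leq y x"
  proof (intro ballI)
    fix x y assume "x \<in> K0 \<union> K1" "y \<in> K0 \<union> K1"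
    then obtain b c where "b # x \<in> K'" "c # y \<in> K'" unfolding K0_def K1_def by auto
    then have "leq (b # x) (c # y) \<or> leq (c # y) (b # x)" using step.prems(2) by blast
    then show "leq x y \<or> leq y x" by auto
  qed
  have le: "card (K0 \<union> K1) \<le> Suc n" using chain_bound[OF _ _ K01L ch] bL by blast
  have int1: "card (K0 \<inter> K1) \<le> Suc 0"
  proof -
    have "\<forall>x\<in>K0 \<inter> K1. \<forall>y\<in>K0 \<inter> K1. x = y"
    proof (intro ballI)
      fix x y assume x: "x \<in> K0 \<inter> K1" and y: "y \<in> K0 \<inter> K1"
      have "False # x \<in> K'" "True # y \<in> K'" using x y K0_def K1_def by auto
      then have "leq x y" using step.prems(2) by fastforce
      have "False # y \<in> K'" "True # x \<in> K'" using x y K0_def K1_def by auto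
      then have "leq y x" using step.prems(2) by fastforce
      show "x = y" using \<open>leq x y\<close> \<open>leq y x\<close> leq_antisym by blast
    qed
    then show ?thesis using card_le_Suc0_iff_eq finK0 finK1 by blast
  qed
  have "card K0 + card K1 = card (K0 \<union> K1) + card (K0 \<inter> K1)"
    using card_Un_Int[OF finK0 finK1] .
  then have c01: "card (K0 \<union> K1) = Suc n" and ci: "card (K0 \<inter> K1) = 1"
    using cardK' step.prems(3) le int1 by auto
  obtain \<beta> a where a'e: "a' = \<beta> # a" using step.prems(4) KL' dbl_cases L'_def by blast
  have aK: "a \<in> K0 \<union> K1" using step.prems(4) a'e K0_def K1_def by (cases \<beta>) auto
  have IH: "LM L a" using step.hyps(2)[OF K01L ch c01 aK] .
  have aL: "a \<in> L" using aK K01L by blast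
  have pa: "leq p a" if \<beta>
  proof -
    obtain x where x: "x \<in> K0 \<inter> K1" using ci by (metis card.empty ex_in_conv zero_neq_one)
    have "False # x \<in> K'" "True # x \<in> K'" using x K0_def K1_def by auto
    then have "leq x q" "inU p q x" using KL' mem by auto
    then have px: "leq p x" unfolding inU_def by simp
    have "leq (False # x) (True # a) \<or> leq (True # a) (False # x)"
    proof -
      have "True # a \<in> K'" using step.prems(4) a'e that by simp
      then show ?thesis using step.prems(2) \<open>False # x \<in> K'\<close> by blast
    qed
    then have "leq x a" by auto
    then show ?thesis using px leq_trans by blast
  qed
  have aL': "\<beta> # a \<in> doubling L (interval L p q)" using step.prems(4) KL' a'e L'_def by auto
  show ?case unfolding a'e by (rule LM_step[OF step.hyps(1,3,4,5) IH aL pa aL'])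
qed


theorem lemma3p20:
  assumes "cu_doubling L"
    and "extremal L"
    and "a \<in> spine L"
  shows "left_modular L a"
proof -
  obtain n where cL: "cud n L" using cu_cud[OF assms(1)] by blast
  note bL = cud_basic[OF cL]
  have "poset_length L \<le> n"
  proof -
    define S where "S = {card K - 1 | K. is_chain L K}"
    have "S \<subseteq> (\<lambda>K. card K - 1) ` Pow L" unfolding S_def is_chain_def by auto
    then have fS: "finite S" using bL by (meson finite_Pow_iff finite_imageI finite_subset)
    have neS: "S \<noteq> {}" unfolding S_def is_chain_def by auto
    have "\<forall>s\<in>S. s \<le> n"
    proof
      fix s assume "s \<in> S"
      then obtain K where "s = card K - 1" "is_chain L K" unfolding S_def by blast
      then show "s \<le> n" using chain_bound[of L n K] bL unfolding is_chain_def by auto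
    qed
    then show ?thesis unfolding poset_length_def S_def[symmetric] using Max_le_iff[OF fS neS] by blast
  qed
  moreover have "n \<le> card (join_irreducibles L)"
  proof -
    have "n \<le> card {x. isJI L x}" using ji_count[OF cL] .
    also have "\<dots> \<le> card (join_irreducibles L)"
    proof (rule card_mono)
      show "finite (join_irreducibles L)" using bL unfolding join_irreducibles_def by auto
      show "{x. isJI L x} \<subseteq> join_irreducibles L" using isJI_ji by blast
    qed
    finally show ?thesis .
  qed
  ultimately have pl: "poset_length L = n" using assms(2) unfolding extremal_def by simp
  obtain K where K: "is_chain L K" "a \<in> K" "card K - 1 = poset_length L"
    using assms(3) unfolding spine_def by blast
  have "finite K" using K(1) bL unfolding is_chain_def using finite_subset by blast
  then have "card K \<noteq> 0" using K(2) by auto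
  then have cK: "card K = Suc n" using K(3) pl by simp
  have "LM L a" using P7[OF cL _ _ cK K(2)] K(1) unfolding is_chain_def by blast
  then show ?thesis unfolding LM_def left_modular_def lt_def by blast
qed

end
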